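(* Let $\alpha>0$, $t_0>0$, $x_0\in\mathcal H$, and let $x:[t_0,+\infty)\to\mathcal H$ be a solution of the Cauchy problem $$\tfrac{\alpha}{t}\dot x(t)+\operatorname{proj}_{C(x(t))+\ddot x(t)}(0)=0\ (t>t_0),\qquad x(t_0)=x_0,\ \dot x(t_0)=0 .$$ Then for all $i=1,\dots,m$ and all $t\in[t_0,+\infty)$ we have $f_i(x(t))\le f_i(x_0)$, i.e. $x(t)\in\{y\in\mathcal H:f_j(y)\le f_j(x_0)\ \forall j\}$ for all $t\ge t_0$.
   Context: $\mathcal H$ is a real Hilbert space. $f_1,\dots,f_m:\mathcal H\to\mathbb R$ are convex and continuously differentiable. $C(x)=\operatorname{co}\{\nabla f_i(x):i=1,\dots,m\}$. For a closed convex $K$, $\operatorname{proj}_K(y)=\arg\min_{w\in K}\|w-y\|^2$. A solution of the Cauchy problem is a function $x:[t_0,+\infty)\to\mathcal H$ such that: $x\in C^1([t_0,+\infty))$; $\dot x$ is absolutely continuous on $[t_0,T]$ for every $T\ge t_0$; there is a Bochner measurable $\ddot x$ with $\dot x(t)=\dot x(t_0)+\int_{t_0}^t\ddot x(s)\,ds$ for all $t$, and $\frac{d}{dt}\dot x=\ddot x$ a.e.; the equation holds for almost all $t\ge t_0$; and the initial conditions hold. *)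

theory Defs
  imports "HOL-Analysis.Analysis"
begin

definition abs_cont_on_ivl :: "(real \<Rightarrow> 'a::real_normed_vector) \<Rightarrow> real \<Rightarrow> real \<Rightarrow> bool" where
  "abs_cont_on_ivl f a b \<longleftrightarrow>
     (\<forall>\<epsilon>>0. \<exists>\<delta>>0. \<forall>(n::nat) (u::nat \<Rightarrow> real) (v::nat \<Rightarrow> real).
        (\<forall>k<n. a \<le> u k \<and> u k \<le> v k \<and> v k \<le> b) \<and>
        (\<forall>j<n. \<forall>k<n. j \<noteq> k \<longrightarrow> v j \<le> u k \<or> v k \<le> u j) \<and>
        (\<Sum>k<n. v k - u k) < \<delta>
        \<longrightarrow> (\<Sum>k<n. norm (f (v k) - f (u k))) < \<epsilon>)"

definition Cset :: "(nat \<Rightarrow> 'a \<Rightarrow> 'a::real_inner) \<Rightarrow> nat \<Rightarrow> 'a \<Rightarrow> 'a set" where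
  "Cset g m y = convex hull {g i y | i. i \<in> {1..m}}"

definition proj :: "'a::real_inner set \<Rightarrow> 'a \<Rightarrow> 'a" where
  "proj K y = (SOME w. w \<in> K \<and> (\<forall>v\<in>K. (norm (w - y))\<^sup>2 \<le> (norm (v - y))\<^sup>2))"

definition is_solution ::
  "(nat \<Rightarrow> 'a \<Rightarrow> 'a::{real_inner,complete_space}) \<Rightarrow> nat \<Rightarrow> real \<Rightarrow> real \<Rightarrow> 'a
   \<Rightarrow> (real \<Rightarrow> 'a) \<Rightarrow> (real \<Rightarrow> 'a) \<Rightarrow> (real \<Rightarrow> 'a) \<Rightarrow> bool" where
  "is_solution g m \<alpha> t0 x0 x xd xdd \<longleftrightarrow>
     \<comment> \<open>x \<in> C^1([t0,+\<infinity>)) with derivative xd\<close>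
     (\<forall>t\<ge>t0. (x has_vector_derivative xd t) (at t within {t0..})) \<and>
     continuous_on {t0..} xd \<and>
     \<comment> \<open>xd absolutely continuous on every [t0,T]\<close>
     (\<forall>T\<ge>t0. abs_cont_on_ivl xd t0 T) \<and>
     \<comment> \<open>xdd Bochner measurable, Bochner integrable on each [t0,t], xd(t) = xd(t0) + int xdd\<close>
     xdd measurable_on {t0..} \<and>
     (\<forall>t\<ge>t0. (\<lambda>s. norm (xdd s)) integrable_on {t0..t} \<and>
              (xdd has_integral (xd t - xd t0)) {t0..t}) \<and>
     \<comment> \<open>d/dt xd = xdd almost everywhere\<close>
     (\<exists>N. negligible N \<and> (\<forall>t. t > t0 \<and> t \<notin> N \<longrightarrow> (xd has_vector_derivative xdd t) (at t))) \<and>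
     \<comment> \<open>the equation holds for almost all t > t0\<close>
     (\<exists>N. negligible N \<and> (\<forall>t. t > t0 \<and> t \<notin> N \<longrightarrow>
        (\<alpha> / t) *\<^sub>R xd t + proj ((\<lambda>c. c + xdd t) ` Cset g m (x t)) 0 = 0)) \<and>
     \<comment> \<open>initial conditions\<close>
     x t0 = x0 \<and> xd t0 = 0"

end

theory Submission
  imports Defs
begin


lemma acD:
  fixes f :: "real \<Rightarrow> 'a::real_normed_vector"
  assumes "abs_cont_on_ivl f a b" "e > 0"
  obtains d where "d > 0" "\<And>(n::nat) (u::nat\<Rightarrow>real) (v::nat\<Rightarrow>real). (\<forall>k<n. a \<le> u k \<and> u k \<le> v k \<and> v k \<le> b) \<and>
        (\<forall>j<n. \<forall>k<n. j \<noteq> k \<longrightarrow> v j \<le> u k \<or> v k \<le> u j) \<and>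
        (\<Sum>k<n. v k - u k) < d
        \<Longrightarrow> (\<Sum>k<n. norm (f (v k) - f (u k))) < e"
proof -
  from assms obtain d where "d > 0" and h: "\<forall>(n::nat) (u::nat\<Rightarrow>real) (v::nat\<Rightarrow>real). (\<forall>k<n. a \<le> u k \<and> u k \<le> v k \<and> v k \<le> b) \<and>
        (\<forall>j<n. \<forall>k<n. j \<noteq> k \<longrightarrow> v j \<le> u k \<or> v k \<le> u j) \<and>
        (\<Sum>k<n. v k - u k) < d
        \<longrightarrow> (\<Sum>k<n. norm (f (v k) - f (u k))) < e"
    unfolding abs_cont_on_ivl_def by blast
  then show thesis using that by blast
qed

lemma ac_lipschitz:
  fixes \<phi> :: "real \<Rightarrow> real"
  assumes L: "L \<ge> 0" and lip: "\<And>u v. a \<le> u \<Longrightarrow> u \<le> v \<Longrightarrow> v \<le> b \<Longrightarrow> \<bar>\<phi> v - \<phi> u\<bar> \<le> L * (v - u)"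
  shows "abs_cont_on_ivl \<phi> a b"
  unfolding abs_cont_on_ivl_def
  apply (intro allI impI)
  subgoal for \<epsilon>
    apply (rule exI[of _ "\<epsilon>/(L+1)"])
    apply (intro conjI allI impI)
    subgoal using L by simp
    subgoal premises prems for n u v
    proof -
      have "(\<Sum>k<n. norm (\<phi> (v k) - \<phi> (u k))) \<le> (\<Sum>k<n. L*(v k - u k))"
        by (rule sum_mono) (use prems lip in auto)
      also have "\<dots> = L * (\<Sum>k<n. v k - u k)" by (simp add: sum_distrib_left)
      also have "\<dots> \<le> L * (\<epsilon>/(L+1))" using prems L by (intro mult_left_mono) auto
      also have "\<dots> < \<epsilon>" using L \<open>\<epsilon>>0\<close> by (simp add: field_simps)
      finally show ?thesis .
    qed
    done
  done

lemma ac_dominated: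
  fixes \<phi> :: "real \<Rightarrow> real" and \<psi> :: "real \<Rightarrow> 'a::real_normed_vector"
  assumes L: "L \<ge> 0" and ac: "abs_cont_on_ivl \<psi> a b"
    and dom: "\<And>u v. a \<le> u \<Longrightarrow> u \<le> v \<Longrightarrow> v \<le> b \<Longrightarrow> \<bar>\<phi> v - \<phi> u\<bar> \<le> L * norm (\<psi> v - \<psi> u)"
  shows "abs_cont_on_ivl \<phi> a b"
  unfolding abs_cont_on_ivl_def
  apply (intro allI impI)
  subgoal for \<epsilon>
  proof -
    assume "\<epsilon> > 0"
    then have "\<epsilon>/(L+1) > 0" using L by simp
    obtain \<delta> where d: "\<delta> > 0" and H0: "\<forall>(n::nat) (u::nat\<Rightarrow>real) (v::nat\<Rightarrow>real). (\<forall>k<n. a \<le> u k \<and> u k \<le> v k \<and> v k \<le> b) \<and>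
        (\<forall>j<n. \<forall>k<n. j \<noteq> k \<longrightarrow> v j \<le> u k \<or> v k \<le> u j) \<and>
        (\<Sum>k<n. v k - u k) < \<delta>
        \<longrightarrow> (\<Sum>k<n. norm (\<psi> (v k) - \<psi> (u k))) < \<epsilon>/(L+1)"
      using ac \<open>\<epsilon>/(L+1) > 0\<close> unfolding abs_cont_on_ivl_def by blast
    note H = H0[rule_format]
    show ?thesis
      apply (rule exI[of _ \<delta>])
      apply (intro conjI allI impI)
      subgoal using d by simp
      subgoal premises prems for n u v
      proof -
        have "(\<Sum>k<n. norm (\<phi> (v k) - \<phi> (u k))) \<le> (\<Sum>k<n. L * norm (\<psi> (v k) - \<psi> (u k)))"
          by (rule sum_mono) (use prems dom in auto)
        also have "\<dots> = L * (\<Sum>k<n. norm (\<psi> (v k) - \<psi> (u k)))" by (simp add: sum_distrib_left)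
        also have "\<dots> \<le> L * (\<epsilon>/(L+1))" using H[OF prems] L by (intro mult_left_mono) auto
        also have "\<dots> < \<epsilon>" using L \<open>\<epsilon>>0\<close> by (simp add: field_simps)
        finally show ?thesis .
      qed
      done
  qed
  done

lemma ac_add:
  fixes \<phi> \<psi> :: "real \<Rightarrow> real"
  assumes a1: "abs_cont_on_ivl \<phi> a b" and a2: "abs_cont_on_ivl \<psi> a b"
  shows "abs_cont_on_ivl (\<lambda>t. \<phi> t + \<psi> t) a b"
  unfolding abs_cont_on_ivl_def
  apply (intro allI impI)
  subgoal for \<epsilon>
  proof -
    assume "\<epsilon> > 0"
    then have "\<epsilon>/2 > 0" by simp
    obtain \<delta>1 where d1: "\<delta>1 > 0" and H10: "\<forall>(n::nat) (u::nat\<Rightarrow>real) (v::nat\<Rightarrow>real). (\<forall>k<n. a \<le> u k \<and> u k \<le> v k \<and> v k \<le> b) \<and>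
        (\<forall>j<n. \<forall>k<n. j \<noteq> k \<longrightarrow> v j \<le> u k \<or> v k \<le> u j) \<and>
        (\<Sum>k<n. v k - u k) < \<delta>1
        \<longrightarrow> (\<Sum>k<n. norm (\<phi> (v k) - \<phi> (u k))) < \<epsilon>/2"
      using a1 \<open>\<epsilon>/2>0\<close> unfolding abs_cont_on_ivl_def by blast
    note H1 = H10[rule_format]
    obtain \<delta>2 where d2: "\<delta>2 > 0" and H20: "\<forall>(n::nat) (u::nat\<Rightarrow>real) (v::nat\<Rightarrow>real). (\<forall>k<n. a \<le> u k \<and> u k \<le> v k \<and> v k \<le> b) \<and>
        (\<forall>j<n. \<forall>k<n. j \<noteq> k \<longrightarrow> v j \<le> u k \<or> v k \<le> u j) \<and>
        (\<Sum>k<n. v k - u k) < \<delta>2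
        \<longrightarrow> (\<Sum>k<n. norm (\<psi> (v k) - \<psi> (u k))) < \<epsilon>/2"
      using a2 \<open>\<epsilon>/2>0\<close> unfolding abs_cont_on_ivl_def by blast
    note H2 = H20[rule_format]
    show ?thesis
      apply (rule exI[of _ "min \<delta>1 \<delta>2"])
      apply (intro conjI allI impI)
      subgoal using d1 d2 by simp
      subgoal premises prems for n u v
      proof -
        have "(\<Sum>k<n. norm (\<phi> (v k) + \<psi> (v k) - (\<phi> (u k) + \<psi> (u k)))) \<le>
              (\<Sum>k<n. norm (\<phi> (v k) - \<phi> (u k)) + norm (\<psi> (v k) - \<psi> (u k)))"
          by (rule sum_mono) auto
        also have "\<dots> = (\<Sum>k<n. norm (\<phi> (v k) - \<phi> (u k))) + (\<Sum>k<n. norm (\<psi> (v k) - \<psi> (u k)))"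
          by (simp add: sum.distrib)
        also have "\<dots> < \<epsilon>/2 + \<epsilon>/2"
          using H1[of n u v] H2[of n u v] prems by (intro add_strict_mono) auto
        finally show ?thesis by simp
      qed
      done
  qed
  done



abbreviation cnt :: "real set \<Rightarrow> real" where "cnt \<equiv> Henstock_Kurzweil_Integration.content"


lemma tdiv_interval:
  assumes "D tagged_division_of {a..b::real}" "(t,K) \<in> D"
  obtains u v where "K = {u..v}" "u \<le> t" "t \<le> v" "a \<le> u" "v \<le> b"
proof -
  obtain u v where K: "K = cbox u v" using tagged_division_ofD(4)[OF assms] by blast
  have "t \<in> K" using tagged_division_ofD(2)[OF assms] .
  moreover have "K \<subseteq> {a..b}" using tagged_division_ofD(3)[OF assms] .
  ultimately show thesis using that[of u v] K by (auto simp: box_real)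
qed

lemma ac_mono_aux:
  fixes \<phi> :: "real \<Rightarrow> real"
  assumes ab: "a \<le> b" and ac: "abs_cont_on_ivl \<phi> a b" and N: "negligible N"
    and der: "\<And>t. t \<in> {a<..<b} \<Longrightarrow> t \<notin> N \<Longrightarrow> \<exists>D. (\<phi> has_real_derivative D) (at t) \<and> D \<le> 0"
    and \<epsilon>: "\<epsilon> > 0"
  shows "\<phi> b - \<phi> a \<le> \<epsilon> * (b - a + 1)"
proof -
  define N' where "N' = N \<union> {a,b}"
  have negN': "negligible N'" unfolding N'_def by (intro negligible_Un N negligible_finite) simp
  obtain \<delta> where d: "\<delta> > 0" and H0: "\<forall>(n::nat) (u::nat\<Rightarrow>real) (v::nat\<Rightarrow>real). (\<forall>k<n. a \<le> u k \<and> u k \<le> v k \<and> v k \<le> b) \<and>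
        (\<forall>j<n. \<forall>k<n. j \<noteq> k \<longrightarrow> v j \<le> u k \<or> v k \<le> u j) \<and>
        (\<Sum>k<n. v k - u k) < \<delta>
        \<longrightarrow> (\<Sum>k<n. norm (\<phi> (v k) - \<phi> (u k))) < \<epsilon>"
    using ac \<epsilon> unfolding abs_cont_on_ivl_def by blast
  note H = H0[rule_format]
  have hi: "(indicat_real N' has_integral 0) (cbox a b)" using negN' unfolding negligible_def by blast
  obtain \<gamma>1 where g1: "gauge \<gamma>1" and g1H0: "\<forall>D. D tagged_division_of cbox a b \<and> \<gamma>1 fine D \<longrightarrow>
      norm ((\<Sum>(x,K)\<in>D. cnt K *\<^sub>R indicat_real N' x) - 0) < \<delta>"
    using hi[unfolded has_integral, rule_format, OF d] by blast
  have ex: "\<forall>t. \<exists>r. r > 0 \<and> (t \<in> {a<..<b} \<and> t \<notin> N' \<longrightarrow>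
      (\<forall>y. \<bar>y - t\<bar> < r \<longrightarrow> (t \<le> y \<longrightarrow> \<phi> y - \<phi> t \<le> \<epsilon> * (y - t)) \<and> (y \<le> t \<longrightarrow> \<phi> t - \<phi> y \<le> \<epsilon> * (t - y))))"
  proof
    fix t
    show "\<exists>r. r > 0 \<and> (t \<in> {a<..<b} \<and> t \<notin> N' \<longrightarrow>
      (\<forall>y. \<bar>y - t\<bar> < r \<longrightarrow> (t \<le> y \<longrightarrow> \<phi> y - \<phi> t \<le> \<epsilon> * (y - t)) \<and> (y \<le> t \<longrightarrow> \<phi> t - \<phi> y \<le> \<epsilon> * (t - y))))"
    proof (cases "t \<in> {a<..<b} \<and> t \<notin> N'")
      case False
      then show ?thesis by (intro exI[of _ 1]) auto
    next
      case True
      then obtain D where D: "(\<phi> has_real_derivative D) (at t)" "D \<le> 0"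
        using der unfolding N'_def by blast
      then have "\<exists>r>0. \<forall>y. norm (y - t) < r \<longrightarrow> norm (\<phi> y - \<phi> t - D * (y - t)) \<le> \<epsilon> * norm (y - t)"
        using \<epsilon> unfolding has_field_derivative_def has_derivative_at_alt by blast
      then obtain r where r: "r > 0" "\<And>y. \<bar>y - t\<bar> < r \<Longrightarrow> \<bar>\<phi> y - \<phi> t - D * (y - t)\<bar> \<le> \<epsilon> * \<bar>y - t\<bar>"
        by auto
      show ?thesis
      proof (intro exI[of _ r] conjI impI allI)
        fix y assume y: "\<bar>y - t\<bar> < r"
        { assume "t \<le> y"
          then have "D * (y - t) \<le> 0" using D(2) by (simp add: mult_nonpos_nonneg)
          then show "\<phi> y - \<phi> t \<le> \<epsilon> * (y - t)" using r(2)[OF y] \<open>t \<le> y\<close> by auto }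
        { assume "y \<le> t"
          then have "D * (y - t) \<ge> 0" using D(2) by (simp add: mult_nonpos_nonpos)
          then show "\<phi> t - \<phi> y \<le> \<epsilon> * (t - y)" using r(2)[OF y] \<open>y \<le> t\<close> by auto }
      qed (use r in auto)
    qed
  qed
  then obtain r where r: "\<And>t. r t > 0" and rH: "\<And>t y. t \<in> {a<..<b} \<Longrightarrow> t \<notin> N' \<Longrightarrow> \<bar>y - t\<bar> < r t \<Longrightarrow>
      (t \<le> y \<longrightarrow> \<phi> y - \<phi> t \<le> \<epsilon> * (y - t)) \<and> (y \<le> t \<longrightarrow> \<phi> t - \<phi> y \<le> \<epsilon> * (t - y))"
  proof -
    from choice[OF ex] obtain r where rr: "\<forall>t. r t > 0 \<and> (t \<in> {a<..<b} \<and> t \<notin> N' \<longrightarrow>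
      (\<forall>y. \<bar>y - t\<bar> < r t \<longrightarrow> (t \<le> y \<longrightarrow> \<phi> y - \<phi> t \<le> \<epsilon> * (y - t)) \<and> (y \<le> t \<longrightarrow> \<phi> t - \<phi> y \<le> \<epsilon> * (t - y))))"
      by blast
    show thesis
    proof (rule that)
      show "\<And>t. r t > 0" using rr by blast
      fix t y assume "t \<in> {a<..<b}" "t \<notin> N'" "\<bar>y - t\<bar> < r t"
      then show "(t \<le> y \<longrightarrow> \<phi> y - \<phi> t \<le> \<epsilon> * (y - t)) \<and> (y \<le> t \<longrightarrow> \<phi> t - \<phi> y \<le> \<epsilon> * (t - y))"
        using rr by blast
    qed
  qed
  define \<gamma> where "\<gamma> = (\<lambda>t. \<gamma>1 t \<inter> ball t (r t))"
  have "gauge \<gamma>" unfolding \<gamma>_def using g1 gauge_ball_dependent r by (intro gauge_Int) auto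
  then obtain D where Ddiv: "D tagged_division_of cbox a b" and Dfine: "\<gamma> fine D"
    using fine_division_exists by blast
  have fine1: "\<gamma>1 fine D" and fine2: "(\<lambda>t. ball t (r t)) fine D"
    using Dfine unfolding \<gamma>_def fine_Int by auto
  have Ddiv': "D tagged_division_of {a..b}" using Ddiv by (simp add: box_real)
  have finD: "finite D" using Ddiv by blast
  define F where "F = (\<lambda>(x::real, K::real set). \<phi> (Sup K) - \<phi> (Inf K))"
  have sumF: "sum F D = \<phi> b - \<phi> a"
    unfolding F_def using additive_tagged_division_1[OF ab Ddiv'] .
  define D2 where "D2 = {p\<in>D. fst p \<in> N' \<and> cnt (snd p) > 0}"
  have Fsplit: "F p = (if fst p \<notin> N' then F p else 0) + (if p \<in> D2 then F p else 0)" if "p \<in> D" for p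
  proof -
    obtain t K where p: "p = (t,K)" by fastforce
    have tK: "(t,K) \<in> D" using that p by simp
    obtain u v where K: "K = {u..v}" "u \<le> t" "t \<le> v" "a \<le> u" "v \<le> b" by (rule tdiv_interval[OF Ddiv' tK])
    show ?thesis
    proof (cases "fst p \<in> N' \<and> cnt (snd p) = 0")
      case True
      then have "u = v" using K p by auto
      then show ?thesis using True p K by (simp add: F_def D2_def)
    next
      case False
      have nn: "cnt (snd p) \<ge> 0" by simp
      show ?thesis
      proof (cases "fst p \<in> N'")
        case True
        with False have "cnt (snd p) \<noteq> 0" by simp
        with nn have "cnt (snd p) > 0" by linarith
        then show ?thesis using True that by (simp add: D2_def)
      next
        case False
        then show ?thesis by (simp add: D2_def)
      qed
    qed
  qed
  have "sum F D = (\<Sum>p\<in>D. (if fst p \<notin> N' then F p else 0)) + (\<Sum>p\<in>D. (if p \<in> D2 then F p else 0))"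
    by (subst sum.distrib[symmetric], rule sum.cong) (use Fsplit in auto)
  also have "(\<Sum>p\<in>D. (if fst p \<notin> N' then F p else 0)) \<le> (\<Sum>p\<in>D. \<epsilon> * cnt (snd p))"
  proof (rule sum_mono)
    fix p assume pD: "p \<in> D"
    obtain t K where p: "p = (t,K)" by fastforce
    have tK: "(t,K) \<in> D" using pD p by simp
    obtain u v where K: "K = {u..v}" "u \<le> t" "t \<le> v" "a \<le> u" "v \<le> b" by (rule tdiv_interval[OF Ddiv' tK])
    show "(if fst p \<notin> N' then F p else 0) \<le> \<epsilon> * cnt (snd p)"
    proof (cases "t \<in> N'")
      case True
      then show ?thesis using p \<epsilon> by simp
    next
      case False
      then have ta: "t \<in> {a<..<b}" using K unfolding N'_def by auto
      have "K \<subseteq> ball t (r t)" using fine2 pD p unfolding fine_def by blast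
      moreover have "u \<in> K" "v \<in> K" using K by auto
      ultimately have "u \<in> ball t (r t)" "v \<in> ball t (r t)" by blast+
      then have "\<bar>u - t\<bar> < r t" "\<bar>v - t\<bar> < r t" by (auto simp: dist_real_def abs_minus_commute)
      from rH[OF ta False this(1)] rH[OF ta False this(2)] K
      have "\<phi> v - \<phi> t \<le> \<epsilon> * (v - t)" "\<phi> t - \<phi> u \<le> \<epsilon> * (t - u)" by auto
      then show ?thesis using False p K by (simp add: F_def algebra_simps)
    qed
  qed
  also have "(\<Sum>p\<in>D. \<epsilon> * cnt (snd p)) = \<epsilon> * (b - a)"
    using additive_content_tagged_division[OF Ddiv] ab
    by (simp add: sum_distrib_left[symmetric] split_def box_real)
  also have "(\<Sum>p\<in>D. (if p \<in> D2 then F p else 0)) = sum F D2"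
    unfolding D2_def using finD by (simp add: sum.inter_filter)
  also have "sum F D2 \<le> (\<Sum>p\<in>D2. \<bar>F p\<bar>)" by (rule sum_mono) auto
  also have "(\<Sum>p\<in>D2. \<bar>F p\<bar>) < \<epsilon>"
  proof -
    have finD2: "finite D2" using finD unfolding D2_def by simp
    obtain e where e: "bij_betw e {0..<card D2} D2" using ex_bij_betw_nat_finite[OF finD2] by blast
    define n where "n = card D2"
    define u where "u = (\<lambda>k. Inf (snd (e k)))"
    define v where "v = (\<lambda>k. Sup (snd (e k)))"
    have eD: "e k \<in> D2" if "k < n" for k using e that unfolding n_def bij_betw_def by auto
    have ivl: "snd (e k) = {u k..v k} \<and> a \<le> u k \<and> u k < v k \<and> v k \<le> b \<and> e k \<in> D" if "k < n" for k
    proof -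
      obtain t K where p: "e k = (t,K)" by fastforce
      have "e k \<in> D" "cnt K > 0" using eD[OF that] p unfolding D2_def by auto
      obtain uu vv where K: "K = {uu..vv}" "uu \<le> t" "t \<le> vv" "a \<le> uu" "vv \<le> b"
        using tdiv_interval[OF Ddiv', of t K] \<open>e k \<in> D\<close> p by auto
      have "uu < vv" using \<open>cnt K > 0\<close> K by auto
      then show ?thesis using K p \<open>e k \<in> D\<close> by (simp add: u_def v_def)
    qed
    have A1: "\<forall>k<n. a \<le> u k \<and> u k \<le> v k \<and> v k \<le> b"
    proof (intro allI impI)
      fix k assume "k < n"
      from ivl[OF this] show "a \<le> u k \<and> u k \<le> v k \<and> v k \<le> b" by linarith
    qed
    have A2: "\<forall>j<n. \<forall>k<n. j \<noteq> k \<longrightarrow> v j \<le> u k \<or> v k \<le> u j"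
    proof (intro allI impI)
      fix j k assume jk: "j < n" "k < n" "j \<noteq> k"
      have "e j \<noteq> e k" using e jk unfolding bij_betw_def inj_on_def n_def by auto
      have ejD: "(fst (e j), snd (e j)) \<in> D" using conjunct2[OF conjunct2[OF conjunct2[OF conjunct2[OF ivl[OF jk(1)]]]]] by (simp only: prod.collapse)
      have ekD: "(fst (e k), snd (e k)) \<in> D" using conjunct2[OF conjunct2[OF conjunct2[OF conjunct2[OF ivl[OF jk(2)]]]]] by (simp only: prod.collapse)
      have "(fst (e j), snd (e j)) \<noteq> (fst (e k), snd (e k))" using \<open>e j \<noteq> e k\<close> by simp
      then have "interior (snd (e j)) \<inter> interior (snd (e k)) = {}"
        using tagged_division_ofD(5)[OF Ddiv ejD ekD] by blast
      then have disj: "{u j<..<v j} \<inter> {u k<..<v k} = {}" using ivl[OF jk(1)] ivl[OF jk(2)] by simp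
      show "v j \<le> u k \<or> v k \<le> u j"
      proof (rule ccontr)
        assume "\<not> (v j \<le> u k \<or> v k \<le> u j)"
        then have "(max (u j) (u k) + min (v j) (v k))/2 \<in> {u j<..<v j} \<inter> {u k<..<v k}"
          using ivl[OF jk(1)] ivl[OF jk(2)] by auto
        then show False using disj by blast
      qed
    qed
    have sumc: "(\<Sum>k<n. v k - u k) = (\<Sum>p\<in>D2. cnt (snd p))"
    proof -
      have "(\<Sum>k<n. v k - u k) = (\<Sum>k<n. cnt (snd (e k)))"
      proof (rule sum.cong)
        fix k assume "k \<in> {..<n}"
        then have "k < n" by simp
        from ivl[OF this] show "v k - u k = cnt (snd (e k))" by simp
      qed simp
      also have "\<dots> = (\<Sum>p\<in>D2. cnt (snd p))"
        using sum.reindex_bij_betw[OF e, of "\<lambda>p. cnt (snd p)"] unfolding n_def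
        by (simp add: lessThan_atLeast0)
      finally show ?thesis .
    qed
    have "(\<Sum>p\<in>D2. cnt (snd p)) = (\<Sum>p\<in>D. cnt (snd p) * indicat_real N' (fst p))"
    proof -
      have "(\<Sum>p\<in>D. cnt (snd p) * indicat_real N' (fst p)) = (\<Sum>p\<in>D. if p \<in> D2 then cnt (snd p) else 0)"
      proof (rule sum.cong)
        fix p assume "p \<in> D"
        have nn: "cnt (snd p) \<ge> 0" by simp
        show "cnt (snd p) * indicat_real N' (fst p) = (if p \<in> D2 then cnt (snd p) else 0)"
        proof (cases "fst p \<in> N' \<and> cnt (snd p) \<noteq> 0")
          case True
          then have "cnt (snd p) > 0" using nn by linarith
          then show ?thesis using True \<open>p \<in> D\<close> by (simp add: D2_def)
        next
          case False
          then show ?thesis by (auto simp: D2_def)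
        qed
      qed simp
      also have "\<dots> = (\<Sum>p\<in>D2. cnt (snd p))"
        unfolding D2_def using finD by (simp add: sum.inter_filter)
      finally show ?thesis by simp
    qed
    also have "\<dots> < \<delta>"
    proof -
      have "norm ((\<Sum>(x,K)\<in>D. cnt K *\<^sub>R indicat_real N' x) - 0) < \<delta>"
        using g1H0 Ddiv fine1 by blast
      moreover have "(\<Sum>(x,K)\<in>D. cnt K *\<^sub>R indicat_real N' x) = (\<Sum>p\<in>D. cnt (snd p) * indicat_real N' (fst p))"
        by (simp add: split_def)
      ultimately show ?thesis by simp
    qed
    finally have A3: "(\<Sum>k<n. v k - u k) < \<delta>" using sumc by simp
    have "(\<Sum>k<n. norm (\<phi> (v k) - \<phi> (u k))) < \<epsilon>" using H[OF conjI[OF A1 conjI[OF A2 A3]]] .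
    moreover have "(\<Sum>k<n. norm (\<phi> (v k) - \<phi> (u k))) = (\<Sum>p\<in>D2. \<bar>F p\<bar>)"
    proof -
      have "(\<Sum>k<n. norm (\<phi> (v k) - \<phi> (u k))) = (\<Sum>k<n. \<bar>F (e k)\<bar>)"
        by (rule sum.cong) (auto simp: F_def u_def v_def split_def)
      also have "\<dots> = (\<Sum>p\<in>D2. \<bar>F p\<bar>)"
        using sum.reindex_bij_betw[OF e, of "\<lambda>p. \<bar>F p\<bar>"] unfolding n_def
        by (simp add: lessThan_atLeast0)
      finally show ?thesis .
    qed
    ultimately show ?thesis by simp
  qed
  finally show ?thesis using sumF by (simp add: algebra_simps)
qed

lemma ac_mono:
  fixes \<phi> :: "real \<Rightarrow> real"
  assumes ab: "a \<le> b" and ac: "abs_cont_on_ivl \<phi> a b" and N: "negligible N"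
    and der: "\<And>t. t \<in> {a<..<b} \<Longrightarrow> t \<notin> N \<Longrightarrow> \<exists>D. (\<phi> has_real_derivative D) (at t) \<and> D \<le> 0"
  shows "\<phi> b \<le> \<phi> a"
proof (rule ccontr)
  assume "\<not> \<phi> b \<le> \<phi> a"
  then have pos: "\<phi> b - \<phi> a > 0" by simp
  define \<epsilon> where "\<epsilon> = (\<phi> b - \<phi> a) / (2 * (b - a + 1))"
  have "\<epsilon> > 0" using pos ab unfolding \<epsilon>_def by simp
  from ac_mono_aux[OF ab ac N der this] have "\<phi> b - \<phi> a \<le> \<epsilon> * (b - a + 1)" by blast
  also have "\<dots> = (\<phi> b - \<phi> a) / 2" using ab unfolding \<epsilon>_def by (simp add: field_simps)
  finally show False using pos by simp
qed



lemma proj_props: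
  fixes K :: "'a::real_inner set"
  assumes "compact K" "K \<noteq> {}"
  shows "proj K 0 \<in> K \<and> (\<forall>v\<in>K. (norm (proj K 0))\<^sup>2 \<le> (norm v)\<^sup>2)"
proof -
  have "continuous_on K (\<lambda>w. (norm w)\<^sup>2)" by (intro continuous_intros)
  from continuous_attains_inf[OF assms this] obtain w where
    "w \<in> K" "\<forall>v\<in>K. (norm w)\<^sup>2 \<le> (norm v)\<^sup>2" by blast
  then have ex: "\<exists>w. w \<in> K \<and> (\<forall>v\<in>K. (norm (w - 0))\<^sup>2 \<le> (norm (v - 0))\<^sup>2)" by auto
  show ?thesis
    unfolding proj_def using someI_ex[OF ex] by simp
qed

lemma min_norm_var:
  fixes w v :: "'a::real_inner"
  assumes seg: "\<And>s. 0 < s \<Longrightarrow> s \<le> 1 \<Longrightarrow> (norm w)\<^sup>2 \<le> (norm (w + s *\<^sub>R (v - w)))\<^sup>2"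
  shows "w \<bullet> (v - w) \<ge> 0"
proof (rule ccontr)
  define a where "a = w \<bullet> (v - w)"
  define b where "b = (v - w) \<bullet> (v - w)"
  assume "\<not> w \<bullet> (v - w) \<ge> 0"
  then have a: "a < 0" unfolding a_def by simp
  have b: "b \<ge> 0" unfolding b_def by simp
  define s where "s = -a / (b - a)"
  have s0: "s > 0" and s1: "s \<le> 1" using a b unfolding s_def by (auto simp: field_simps)
  have "(norm (w + s *\<^sub>R (v - w)))\<^sup>2 = w \<bullet> w + 2 * s * a + s * s * b"
    unfolding power2_norm_eq_inner a_def b_def
    by (simp add: inner_add_left inner_add_right inner_commute algebra_simps)
  moreover have "(norm w)\<^sup>2 = w \<bullet> w" by (simp add: power2_norm_eq_inner)
  ultimately have "0 \<le> 2 * s * a + s * s * b" using seg[OF s0 s1] by simp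
  then have "0 \<le> s * (2 * a + s * b)" by (simp add: algebra_simps)
  then have h: "0 \<le> 2 * a + s * b" using s0 by (simp add: zero_le_mult_iff)
  have "(2 * a + s * b) * (b - a) = a * (b - 2 * a)" using a b unfolding s_def by (simp add: field_simps)
  also have "\<dots> < 0" using a b by (simp add: mult_neg_pos)
  finally have "(2 * a + s * b) * (b - a) < 0" .
  moreover have "b - a > 0" using a b by simp
  ultimately show False using h by (simp add: mult_less_0_iff)
qed



theorem corollary4p2:
  fixes f :: "nat \<Rightarrow> 'a::{real_inner,complete_space} \<Rightarrow> real"
    and g :: "nat \<Rightarrow> 'a \<Rightarrow> 'a"
    and m :: nat and \<alpha> t0 :: real and x0 :: 'a
    and x xd xdd :: "real \<Rightarrow> 'a"
  assumes conv: "\<And>i. i \<in> {1..m} \<Longrightarrow> convex_on UNIV (f i)"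
    and grad: "\<And>i y. i \<in> {1..m} \<Longrightarrow> (f i has_derivative (\<lambda>h. g i y \<bullet> h)) (at y)"
    and grad_cont: "\<And>i. i \<in> {1..m} \<Longrightarrow> continuous_on UNIV (g i)"
    and "\<alpha> > 0" and "t0 > 0"
    and sol: "is_solution g m \<alpha> t0 x0 x xd xdd"
  shows "\<forall>i\<in>{1..m}. \<forall>t\<ge>t0. f i (x t) \<le> f i x0"
proof (intro ballI allI impI)
  fix i T assume i: "i \<in> {1..m}" and T: "T \<ge> t0"
  have xder: "\<And>t. t \<ge> t0 \<Longrightarrow> (x has_vector_derivative xd t) (at t within {t0..})"
    and xdc: "continuous_on {t0..} xd"
    and xdac: "abs_cont_on_ivl xd t0 T"
    and x0: "x t0 = x0" and xd0: "xd t0 = 0"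
    using sol T unfolding is_solution_def by auto
  obtain N1 where N1: "negligible N1" "\<And>t. t > t0 \<Longrightarrow> t \<notin> N1 \<Longrightarrow> (xd has_vector_derivative xdd t) (at t)"
    using sol unfolding is_solution_def by blast
  obtain N2 where N2: "negligible N2" "\<And>t. t > t0 \<Longrightarrow> t \<notin> N2 \<Longrightarrow>
        (\<alpha> / t) *\<^sub>R xd t + proj ((\<lambda>c. c + xdd t) ` Cset g m (x t)) 0 = 0"
    using sol unfolding is_solution_def by blast
  have xc: "continuous_on {t0..} x"
    using xder has_vector_derivative_continuous continuous_on_eq_continuous_within by blast
  define D where "D = (\<lambda>t. g i (x t) \<bullet> xd t)"
  have hder: "((\<lambda>s. f i (x s)) has_derivative (\<lambda>s. s * D t)) (at t within S)"
    if "(x has_vector_derivative xd t) (at t within S)" for t S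
  proof -
    have "(x has_derivative (\<lambda>s. s *\<^sub>R xd t)) (at t within S)"
      using that by (simp add: has_vector_derivative_def)
    from diff_chain_within[OF this has_derivative_at_withinI[OF grad[OF i, of "x t"]]]
    have "((f i \<circ> x) has_derivative ((\<lambda>h. g i (x t) \<bullet> h) \<circ> (\<lambda>s. s *\<^sub>R xd t))) (at t within S)" .
    moreover have "((\<lambda>h. g i (x t) \<bullet> h) \<circ> (\<lambda>s. s *\<^sub>R xd t)) = (\<lambda>s. s * D t)"
      by (auto simp: fun_eq_iff D_def)
    ultimately show ?thesis by (simp add: o_def)
  qed
  define \<phi> where "\<phi> = (\<lambda>t. f i (x t) + (xd t \<bullet> xd t) / 2)"
  show "f i (x T) \<le> f i x0"
  proof (cases "T = t0")
    case True
    then show ?thesis using x0 by simp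
  next
    case False
    then have Tgt: "T > t0" using T by simp
    have Dcont: "continuous_on {t0..T} D"
    proof -
      have "continuous_on {t0..T} x" "continuous_on {t0..T} xd"
        using xc xdc by (auto intro: continuous_on_subset)
      moreover have "continuous_on {t0..T} (\<lambda>t. g i (x t))"
        using continuous_on_compose2[OF grad_cont[OF i] \<open>continuous_on {t0..T} x\<close>] by simp
      ultimately show ?thesis unfolding D_def by (intro continuous_intros) auto
    qed
    obtain L where L: "L > 0" "\<And>t. t \<in> {t0..T} \<Longrightarrow> \<bar>D t\<bar> \<le> L"
      using compact_imp_bounded[OF compact_continuous_image[OF Dcont compact_Icc]]
      unfolding bounded_pos by auto
    have ac1: "abs_cont_on_ivl (\<lambda>t. f i (x t)) t0 T"
    proof (rule ac_lipschitz[of L])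
      show "L \<ge> 0" using L by simp
      fix u v assume uv: "t0 \<le> u" "u \<le> v" "v \<le> T"
      have "\<exists>\<xi>\<in>{u..v}. f i (x v) - f i (x u) = (v - u) * D \<xi>"
      proof (rule mvt_very_simple[OF uv(2), of "\<lambda>s. f i (x s)" "\<lambda>t s. s * D t"])
        fix t assume ut: "u \<le> t" "t \<le> v"
        then have "t0 \<le> t" using uv by simp
        have "{u..v} \<subseteq> {t0..}" using uv by auto
        then have "(x has_vector_derivative xd t) (at t within {u..v})"
          by (rule has_vector_derivative_within_subset[OF xder[OF \<open>t0 \<le> t\<close>]])
        then show "((\<lambda>s. f i (x s)) has_derivative (\<lambda>s. s * D t)) (at t within {u..v})"
          by (rule hder)
      qed
      then obtain \<xi> where \<xi>: "\<xi> \<in> {u..v}" "f i (x v) - f i (x u) = (v - u) * D \<xi>" by blast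
      have "\<bar>D \<xi>\<bar> \<le> L" using L(2)[of \<xi>] \<xi>(1) uv by auto
      have "\<bar>f i (x v) - f i (x u)\<bar> = \<bar>v - u\<bar> * \<bar>D \<xi>\<bar>" unfolding \<xi>(2) by (rule abs_mult)
      also have "\<dots> \<le> (v - u) * L" using \<open>\<bar>D \<xi>\<bar> \<le> L\<close> uv by (intro mult_mono) auto
      also have "\<dots> = L * (v - u)" by (rule mult.commute)
      finally show "\<bar>f i (x v) - f i (x u)\<bar> \<le> L * (v - u)" .
    qed
    obtain B where B: "B > 0" "\<And>t. t \<in> {t0..T} \<Longrightarrow> norm (xd t) \<le> B"
      using compact_imp_bounded[OF compact_continuous_image[OF continuous_on_subset[OF xdc] compact_Icc, of t0 T]]
      unfolding bounded_pos by auto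
    have ac2: "abs_cont_on_ivl (\<lambda>t. (xd t \<bullet> xd t) / 2) t0 T"
    proof (rule ac_dominated[OF _ xdac, of B])
      show "B \<ge> 0" using B by simp
      fix u v assume uv: "t0 \<le> u" "u \<le> v" "v \<le> T"
      have e1: "(xd v - xd u) \<bullet> (xd v + xd u) = xd v \<bullet> xd v + xd v \<bullet> xd u - (xd u \<bullet> xd v + xd u \<bullet> xd u)"
        by (simp only: inner_diff_left inner_add_right)
      have e2: "xd u \<bullet> xd v = xd v \<bullet> xd u" by (rule inner_commute)
      have "xd v \<bullet> xd v - xd u \<bullet> xd u = (xd v - xd u) \<bullet> (xd v + xd u)"
        unfolding e1 e2 by simp
      then have "\<bar>xd v \<bullet> xd v - xd u \<bullet> xd u\<bar> \<le> norm (xd v - xd u) * norm (xd v + xd u)"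
        by (simp only: Cauchy_Schwarz_ineq2)
      also have "\<dots> \<le> norm (xd v - xd u) * (2 * B)"
      proof (rule mult_left_mono)
        have "norm (xd v + xd u) \<le> norm (xd v) + norm (xd u)" by (rule norm_triangle_ineq)
        also have "\<dots> \<le> B + B" using B(2)[of u] B(2)[of v] uv by (intro add_mono) auto
        finally show "norm (xd v + xd u) \<le> 2 * B" by simp
      qed simp
      finally have X: "\<bar>xd v \<bullet> xd v - xd u \<bullet> xd u\<bar> \<le> norm (xd v - xd u) * (2 * B)" .
      have Y: "\<bar>(xd v \<bullet> xd v) / 2 - (xd u \<bullet> xd u) / 2\<bar> = \<bar>xd v \<bullet> xd v - xd u \<bullet> xd u\<bar> / 2"
        by (simp add: diff_divide_distrib[symmetric])
      have Z: "norm (xd v - xd u) * (2 * B) = 2 * (B * norm (xd v - xd u))" by simp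
      show "\<bar>(xd v \<bullet> xd v) / 2 - (xd u \<bullet> xd u) / 2\<bar> \<le> B * norm (xd v - xd u)"
      proof -
        have W: "\<And>a b::real. a \<le> 2 * b \<Longrightarrow> a / 2 \<le> b" by simp
        show ?thesis unfolding Y by (rule W) (use X Z in simp)
      qed
    qed
    have acphi: "abs_cont_on_ivl \<phi> t0 T"
      unfolding \<phi>_def by (rule ac_add[OF ac1 ac2])
    have der: "\<exists>E. (\<phi> has_real_derivative E) (at t) \<and> E \<le> 0"
      if t: "t \<in> {t0<..<T}" "t \<notin> N1 \<union> N2" for t
    proof -
      have tt0: "t > t0" using t by simp
      have "t0 \<le> t" using tt0 by simp
      have "{t0<..} \<subseteq> {t0..}" by auto
      then have "(x has_vector_derivative xd t) (at t within {t0<..})"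
        by (rule has_vector_derivative_within_subset[OF xder[OF \<open>t0 \<le> t\<close>]])
      then have xat: "(x has_vector_derivative xd t) (at t)"
        using at_within_open[of t "{t0<..}"] tt0 by simp
      have xdd: "(xd has_vector_derivative xdd t) (at t)" using N1(2)[OF tt0] t by blast
      have eq: "(\<alpha> / t) *\<^sub>R xd t + proj ((\<lambda>c. c + xdd t) ` Cset g m (x t)) 0 = 0"
        using N2(2)[OF tt0] t by blast
      have d1: "((\<lambda>s. f i (x s)) has_derivative (\<lambda>s. s * D t)) (at t)"
        using hder[OF xat] .
      have d2: "((\<lambda>s. (xd s \<bullet> xd s) / 2) has_derivative (\<lambda>s. s * (xd t \<bullet> xdd t))) (at t)"
        using xdd unfolding has_vector_derivative_def
        by (auto intro!: derivative_eq_intros simp: inner_commute algebra_simps)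
      have "(\<phi> has_derivative (\<lambda>s. s * D t + s * (xd t \<bullet> xdd t))) (at t)"
        unfolding \<phi>_def using has_derivative_add[OF d1 d2] .
      moreover have "(\<lambda>s. s * D t + s * (xd t \<bullet> xdd t)) = (*) (D t + xd t \<bullet> xdd t)"
        by (rule ext) (simp add: algebra_simps)
      ultimately have dphi: "(\<phi> has_real_derivative (D t + xd t \<bullet> xdd t)) (at t)"
        unfolding has_field_derivative_def by simp
      define C where "C = Cset g m (x t)"
      define K where "K = (\<lambda>c. c + xdd t) ` C"
      define p where "p = proj K 0"
      have fin: "finite {g j (x t) | j. j \<in> {1..m}}" by simp
      have cC: "compact C" unfolding C_def Cset_def by (rule finite_imp_compact_convex_hull[OF fin])
      have gC: "g i (x t) \<in> C" unfolding C_def Cset_def using i by (intro hull_inc) blast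
      have convC: "convex C" unfolding C_def Cset_def by simp
      have cK: "compact K" unfolding K_def
        by (rule compact_continuous_image[OF _ cC]) (intro continuous_intros)
      have "K \<noteq> {}" unfolding K_def using gC by blast
      from proj_props[OF cK this] have pK: "p \<in> K" and pmin: "\<forall>v\<in>K. (norm p)\<^sup>2 \<le> (norm v)\<^sup>2"
        unfolding p_def by auto
      obtain cp where cp: "cp \<in> C" "p = cp + xdd t" using pK unfolding K_def by blast
      define v where "v = g i (x t) + xdd t"
      have "p \<bullet> (v - p) \<ge> 0"
      proof (rule min_norm_var)
        fix s :: real assume s: "0 < s" "s \<le> 1"
        have "cp + s *\<^sub>R (g i (x t) - cp) = (1 - s) *\<^sub>R cp + s *\<^sub>R g i (x t)"
          by (simp add: algebra_simps)
        also have "\<dots> \<in> C" using convexD[OF convC cp(1) gC, of "1 - s" s] s by simp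
        finally have "cp + s *\<^sub>R (g i (x t) - cp) + xdd t \<in> K" unfolding K_def by blast
        moreover have "p + s *\<^sub>R (v - p) = cp + s *\<^sub>R (g i (x t) - cp) + xdd t"
          unfolding v_def cp(2) by (simp add: algebra_simps)
        ultimately show "(norm p)\<^sup>2 \<le> (norm (p + s *\<^sub>R (v - p)))\<^sup>2" using pmin by simp
      qed
      then have pv: "p \<bullet> v \<ge> p \<bullet> p" by (simp add: inner_diff_right)
      have peq: "p = - ((\<alpha> / t) *\<^sub>R xd t)"
        using eq unfolding p_def K_def C_def by (simp add: eq_neg_iff_add_eq_0 add.commute)
      have "0 \<le> p \<bullet> p" by simp
      also have "\<dots> \<le> p \<bullet> v" by (rule pv)
      also have "\<dots> = - (\<alpha> / t) * (xd t \<bullet> v)" unfolding peq by simp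
      finally have np: "(\<alpha> / t) * (xd t \<bullet> v) \<le> 0" by simp
      have ap: "\<alpha> / t > 0" using \<open>\<alpha> > 0\<close> tt0 \<open>t0 > 0\<close> by simp
      have "xd t \<bullet> v \<le> 0"
      proof (rule ccontr)
        assume "\<not> xd t \<bullet> v \<le> 0"
        then have "xd t \<bullet> v > 0" by simp
        from mult_pos_pos[OF ap this] np show False by linarith
      qed
      moreover have "D t + xd t \<bullet> xdd t = xd t \<bullet> v"
        unfolding D_def v_def by (simp add: inner_add_right inner_commute)
      ultimately show ?thesis using dphi by auto
    qed
    have "\<phi> T \<le> \<phi> t0"
      by (rule ac_mono[OF T acphi negligible_Un[OF N1(1) N2(1)]]) (use der in blast)
    moreover have "\<phi> t0 = f i x0" unfolding \<phi>_def using x0 xd0 by simp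
    moreover have "f i (x T) \<le> \<phi> T" unfolding \<phi>_def by simp
    ultimately show ?thesis by simp
  qed
qed


end
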